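(* Let $M$ be a compact metric space and $\mathcal{A}\subseteq[\mathbb{N}]^\omega$ an almost disjoint family. A closed subspace $\mathcal{X}$ of $C_0(M\times K_\mathcal{A})$ is separable if and only if $s(\mathcal{X})=\bigcup_{f\in\mathcal{X}}\{A\in\mathcal{A}: \exists k\in M,\ f(k,y_A)\neq 0\}$ is countable.
   Context: $[\mathbb{N}]^\omega$ is the set of infinite subsets of $\mathbb{N}$; $\mathcal{A}$ is \emph{almost disjoint} if $A\cap B$ is finite for distinct $A,B\in\mathcal{A}$. $K_\mathcal{A}$ is the space with distinct points $\{x_n:n\in\mathbb{N}\}\cup\{y_A:A\in\mathcal{A}\}$, each $x_n$ isolated, and the sets $\{x_n:n\in A\setminus G\}\cup\{y_A\}$, $G\subseteq\mathbb{N}$ finite, forming a neighbourhood basis at $y_A$; it is locally compact Hausdorff. $C_0(\cdot)$ denotes continuous scalar functions vanishing at infinity with the sup norm. *)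

theory Defs
  imports "HOL-Analysis.Analysis"
begin

definition almost_disjoint :: "nat set set \<Rightarrow> bool" where
  "almost_disjoint \<A> \<longleftrightarrow> (\<forall>A\<in>\<A>. infinite A) \<and>
     (\<forall>A\<in>\<A>. \<forall>B\<in>\<A>. A \<noteq> B \<longrightarrow> finite (A \<inter> B))"

text \<open>The space K_A: the point x_n is Inl n, the point y_A is Inr A.\<close>
definition K_carrier :: "nat set set \<Rightarrow> (nat + nat set) set" where
  "K_carrier \<A> = range Inl \<union> Inr ` \<A>"

text \<open>Open sets: generated by the basis consisting of the singletons {x_n} and the sets
  {x_n : n in A - G} \<union> {y_A} with G finite.\<close>
definition K_top :: "nat set set \<Rightarrow> (nat + nat set) topology" where
  "K_top \<A> = topology (\<lambda>U. U \<subseteq> K_carrier \<A> \<and>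
      (\<forall>A\<in>\<A>. Inr A \<in> U \<longrightarrow> (\<exists>G. finite G \<and> Inl ` (A - G) \<subseteq> U)))"

text \<open>C_0(X): continuous scalar functions vanishing at infinity; functions are taken to be
  0 outside the carrier so that they are determined by their values on the space.\<close>
definition C0 :: "'x topology \<Rightarrow> ('x \<Rightarrow> 'a::real_normed_field) set" where
  "C0 X = {f. continuous_map X euclidean f \<and>
              (\<forall>e>0. compactin X {p \<in> topspace X. e \<le> norm (f p)}) \<and>
              (\<forall>p. p \<notin> topspace X \<longrightarrow> f p = 0)}"

text \<open>Sup-norm distance (the 0 handles the empty space).\<close>
definition sup_dist :: "'x topology \<Rightarrow> ('x \<Rightarrow> 'a::real_normed_field) \<Rightarrow> ('x \<Rightarrow> 'a) \<Rightarrow> real" where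
  "sup_dist X f g = Sup (insert 0 ((\<lambda>p. norm (f p - g p)) ` topspace X))"

definition closed_subspace_C0 :: "'x topology \<Rightarrow> ('x \<Rightarrow> 'a::real_normed_field) set \<Rightarrow> bool" where
  "closed_subspace_C0 X \<X> \<longleftrightarrow> \<X> \<subseteq> C0 X \<and> (\<lambda>_. 0) \<in> \<X> \<and>
     (\<forall>f\<in>\<X>. \<forall>g\<in>\<X>. (\<lambda>p. f p + g p) \<in> \<X>) \<and>
     (\<forall>c. \<forall>f\<in>\<X>. (\<lambda>p. c * f p) \<in> \<X>) \<and>
     (\<forall>fs g. (\<forall>n. fs n \<in> \<X>) \<and> g \<in> C0 X \<and> (\<lambda>n. sup_dist X (fs n) g) \<longlonglongrightarrow> 0
        \<longrightarrow> g \<in> \<X>)"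

definition separable_sup :: "'x topology \<Rightarrow> ('x \<Rightarrow> 'a::real_normed_field) set \<Rightarrow> bool" where
  "separable_sup X \<X> \<longleftrightarrow> (\<exists>D. countable D \<and> D \<subseteq> \<X> \<and>
     (\<forall>f\<in>\<X>. \<forall>e>0. \<exists>d\<in>D. sup_dist X f d < e))"

end

theory Submission
  imports Defs "HOL-Computational_Algebra.Fundamental_Theorem_Algebra"
begin

definition evr :: "real poly \<Rightarrow> 'b::{real_algebra_1,comm_ring_1} \<Rightarrow> 'b" where
  "evr p x = poly (map_poly of_real p) x"

lemma mpr_mult: "map_poly (of_real::real\<Rightarrow>'b::{real_algebra_1,comm_ring_1}) (p * q) = map_poly of_real p * map_poly of_real q"
  by (intro poly_eqI) (simp add: coeff_map_poly coeff_mult)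

lemma mpr_add: "map_poly (of_real::real\<Rightarrow>'b::{real_algebra_1,comm_ring_1}) (p + q) = map_poly of_real p + map_poly of_real q"
  by (intro poly_eqI) (simp add: coeff_map_poly)

lemma mpr_inj: "map_poly (of_real::real\<Rightarrow>'b::{real_algebra_1,comm_ring_1}) p = map_poly of_real q \<Longrightarrow> p = q"
  by (intro poly_eqI) (metis coeff_map_poly of_real_0 of_real_eq_iff)

lemma evr_mult: "evr (p * q) x = evr p x * evr q x"
  by (simp add: evr_def mpr_mult)
lemma evr_add: "evr (p + q) x = evr p x + evr q x"
  by (simp add: evr_def mpr_add)
lemma evr_const: "evr [:c:] x = of_real c"
  by (simp add: evr_def map_poly_pCons)
lemma evr_one: "evr 1 x = 1"
  using evr_const[of 1 x] by (simp add: pCons_one)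
lemma evr_power: "evr (p ^ n) x = evr p x ^ n"
  by (induction n) (simp_all add: evr_mult evr_one)
lemma evr_prod: "evr (\<Prod>i\<in>A. p i) x = (\<Prod>i\<in>A. evr (p i) x)"
  by (induction A rule: infinite_finite_induct) (simp_all add: evr_mult evr_one)

definition qq :: "complex \<Rightarrow> real poly" where
  "qq z = [:(cmod z)^2, -2 * Re z, 1:]"

lemma evr_qq: "evr (qq z) x = of_real ((cmod z)^2) + x * (of_real (-2 * Re z) + x)"
  by (simp add: evr_def qq_def map_poly_pCons)

lemma evr_qq_self: "evr (qq z) z = 0"
proof (cases z)
  case (Complex a b)
  have "(cmod z)^2 = a^2 + b^2" using cmod_power2[of z] Complex by simp
  then show ?thesis unfolding evr_qq Complex
    by (simp add: complex_eq_iff power2_eq_square algebra_simps)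
qed

lemma mpr_qq: "map_poly complex_of_real (qq r) = [:-r,1:] * [:-cnj r,1:]"
proof -
  have "r * cnj r = of_real ((cmod r)^2)" by (metis complex_norm_square of_real_power)
  moreover have "r + cnj r = of_real (2 * Re r)" by (simp add: complex_add_cnj)
  moreover have "[:-r,1:] * [:-cnj r,1:] = [:r * cnj r, -(r + cnj r), 1:]"
    by (simp add: algebra_simps)
  ultimately show ?thesis
    by (simp add: qq_def map_poly_pCons)
qed

lemma mpr_prod: "map_poly (of_real::real\<Rightarrow>'b::{real_algebra_1,comm_ring_1}) (\<Prod>i<(N::nat). p i) = (\<Prod>i<N. map_poly of_real (p i))"
proof (induction N)
  case 0
  have "map_poly (of_real::real\<Rightarrow>'b) [:1:] = [:1:]" by (simp add: map_poly_pCons)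
  then show ?case by (simp add: pCons_one)
next
  case (Suc N)
  then show ?case by (simp add: mpr_mult)
qed

lemma key_b:
  fixes \<xi> :: "'a::real_normed_field" and G :: "real poly"
  assumes deg: "degree G = N" and lc: "lead_coeff G = 1"
    and root: "evr G z1 = (0::complex)"
    and low: "\<And>z. m \<le> norm (evr (qq z) \<xi>)" and m0: "0 \<le> m"
  shows "norm (evr (qq z1) \<xi>) * m ^ (N - 1) \<le> norm (evr G \<xi>) ^ 2"
proof -
  define P where "P = map_poly complex_of_real G"
  have degP: "degree P = N" unfolding P_def using deg by (simp add: degree_map_poly)
  have lcP: "lead_coeff P = 1" unfolding P_def using lc deg by (simp add: coeff_map_poly degree_map_poly)
  obtain r where r: "smult (lead_coeff P) (\<Prod>i<degree P. [:-r i, 1:]) = P"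
    using complex_poly_decompose' by blast
  hence Pr: "P = (\<Prod>i<N. [:-r i, 1:])" using degP lcP by simp
  have Pc: "(\<Prod>i<N. [:-cnj (r i), 1:]) = P"
  proof -
    have "poly (\<Prod>i<N. [:-cnj (r i), 1:]) z = poly P z" for z
    proof -
      have "poly (\<Prod>i<N. [:-cnj (r i), 1:]) z = (\<Prod>i<N. z - cnj (r i))" by (simp add: poly_prod)
      also have "\<dots> = cnj (\<Prod>i<N. cnj z - r i)" by (simp add: cnj_prod)
      also have "(\<Prod>i<N. cnj z - r i) = poly P (cnj z)" by (subst Pr) (simp add: poly_prod)
      also have "cnj (poly P (cnj z)) = poly P z"
        by (subst poly_cnj_real) (auto simp: P_def coeff_map_poly)
      finally show ?thesis .
    qed
    thus ?thesis using poly_eq_poly_eq_iff by blast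
  qed
  have "map_poly complex_of_real (\<Prod>i<N. qq (r i)) = (\<Prod>i<N. map_poly complex_of_real (qq (r i)))"
    by (rule mpr_prod)
  also have "\<dots> = (\<Prod>i<N. [:-r i,1:]) * (\<Prod>i<N. [:-cnj (r i),1:])"
    by (simp only: mpr_qq prod.distrib)
  also have "\<dots> = map_poly complex_of_real (G * G)" using Pr Pc by (simp add: P_def mpr_mult)
  finally have eq: "(\<Prod>i<N. qq (r i)) = G * G" by (rule mpr_inj)
  have "norm (evr G \<xi>) ^ 2 = norm (evr (G*G) \<xi>)" by (simp add: evr_mult norm_mult power2_eq_square)
  also have "\<dots> = (\<Prod>i<N. norm (evr (qq (r i)) \<xi>))" by (simp add: eq[symmetric] evr_prod prod_norm)
  finally have nG: "norm (evr G \<xi>) ^ 2 = (\<Prod>i<N. norm (evr (qq (r i)) \<xi>))" .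
  have "(\<Prod>i<N. z1 - r i) = 0" using root Pr by (simp add: evr_def P_def[symmetric] poly_prod)
  then obtain i0 where i0: "i0 < N" "r i0 = z1" by auto
  have "(\<Prod>i<N. norm (evr (qq (r i)) \<xi>)) = norm (evr (qq (r i0)) \<xi>) * (\<Prod>i\<in>{..<N}-{i0}. norm (evr (qq (r i)) \<xi>))"
    using i0 by (subst prod.remove[of _ i0]) auto
  moreover have "m ^ (N - 1) \<le> (\<Prod>i\<in>{..<N}-{i0}. norm (evr (qq (r i)) \<xi>))"
  proof -
    have "(\<Prod>i\<in>{..<N}-{i0}. m) \<le> (\<Prod>i\<in>{..<N}-{i0}. norm (evr (qq (r i)) \<xi>))"
      by (rule prod_mono) (use low m0 in auto)
    moreover have "card ({..<N}-{i0}) = N - 1" using i0 by simp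
    ultimately show ?thesis by simp
  qed
  ultimately show ?thesis using nG i0 by (simp add: mult_left_mono)
qed

lemma norm3: "norm (a + b - c) \<le> norm a + norm b + norm (c::'a::real_normed_vector)"
  by (smt (verit) norm_triangle_ineq norm_triangle_ineq4)

lemma quad_root:
  fixes \<xi> :: "'a::real_normed_field"
  shows "\<exists>z. evr (qq z) \<xi> = 0"
proof -
  define f where "f z = norm (evr (qq z) \<xi>)" for z
  have f_eq: "f z = norm (of_real ((cmod z)^2) + \<xi> * (of_real (-2 * Re z) + \<xi>))" for z
    by (simp add: f_def evr_qq)
  have contf: "continuous_on UNIV f"
    unfolding f_eq[abs_def] by (intro continuous_intros)
  have fpos: "f z \<ge> 0" for z by (simp add: f_def)
  have coer: "f z \<ge> (cmod z)^2 - 2 * cmod z * norm \<xi> - norm (\<xi>*\<xi>)" for z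
  proof -
    have e: "of_real ((cmod z)^2) = (of_real ((cmod z)^2) + \<xi> * (of_real (-2 * Re z) + \<xi>)) + of_real (2 * Re z) * \<xi> - \<xi>*\<xi>"
      by (simp add: algebra_simps)
    have "norm (of_real ((cmod z)^2) :: 'a) \<le> f z + norm (of_real (2 * Re z) * \<xi>) + norm (\<xi>*\<xi>)"
      by (subst e, unfold f_eq, rule norm3)
    moreover have "norm (of_real (2 * Re z) * \<xi>) \<le> 2 * cmod z * norm \<xi>"
      using abs_Re_le_cmod[of z] by (simp add: norm_mult mult_right_mono)
    moreover have "norm (of_real ((cmod z)^2) :: 'a) = (cmod z)^2" by (simp only: norm_of_real) simp
    ultimately show ?thesis by linarith
  qed
  define R where "R = 2 * norm \<xi> + norm (\<xi>*\<xi>) + f 0 + 1"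
  have R1: "R \<ge> 1" using fpos[of 0] by (simp add: R_def)
  have far: "f z > f 0" if "cmod z \<ge> R" for z
  proof -
    have a: "cmod z - 2 * norm \<xi> \<ge> norm (\<xi>*\<xi>) + f 0 + 1" using that by (simp add: R_def)
    have b: "0 \<le> cmod z - 2 * norm \<xi>" using a fpos[of 0] norm_ge_zero[of "\<xi>*\<xi>"] by linarith
    have "1 * (cmod z - 2 * norm \<xi>) \<le> cmod z * (cmod z - 2 * norm \<xi>)"
      by (rule mult_right_mono) (use that R1 b in auto)
    then show ?thesis using coer[of z] a by (simp add: power2_eq_square algebra_simps)
  qed
  have "\<exists>x\<in>cball 0 R. \<forall>y\<in>cball 0 R. f x \<le> f y"
    by (rule continuous_attains_inf[OF compact_cball]) (use R1 continuous_on_subset[OF contf] in auto)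
  then obtain zm where zm: "zm \<in> cball 0 R" "\<forall>y\<in>cball 0 R. f zm \<le> f y" by blast
  define m where "m = f zm"
  have zero_in: "(0::complex) \<in> cball 0 R" using R1 by simp
  have low: "m \<le> f z" for z
  proof (cases "z \<in> cball 0 R")
    case True then show ?thesis using zm(2) unfolding m_def by blast
  next
    case False
    then have "cmod z \<ge> R" by (simp add: mem_cball_0)
    then have "f z > f 0" using far by blast
    moreover have "f zm \<le> f 0" using zm(2) zero_in by blast
    ultimately show ?thesis unfolding m_def by linarith
  qed
  have "m = 0"
  proof (rule ccontr)
    assume "m \<noteq> 0"
    then have mpos: "m > 0" using fpos[of zm] by (simp add: m_def)
    define S where "S = {z. f z = m}"
    have clS: "closed S" unfolding S_def by (rule closed_Collect_eq[OF contf]) simp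
    have "S \<subseteq> cball 0 R"
    proof
      fix z assume "z \<in> S"
      show "z \<in> cball 0 R"
      proof (rule ccontr)
        assume "z \<notin> cball 0 R"
        then have "f z > f 0" using far by simp
        moreover have "m \<le> f 0" by (rule low)
        ultimately show False using \<open>z \<in> S\<close> by (simp add: S_def)
      qed
    qed
    then have "compact S" using clS by (meson bounded_cball bounded_subset compact_eq_bounded_closed)
    moreover have "S \<noteq> {}" using m_def S_def by auto
    ultimately obtain z0 where z0: "z0 \<in> S" "\<forall>y\<in>S. cmod y \<le> cmod z0"
      using continuous_attains_sup[of S cmod] continuous_on_norm_id by blast
    have fz0: "f z0 = m" using z0 by (simp add: S_def)
    define \<epsilon> where "\<epsilon> = m / 2"
    have \<epsilon>pos: "\<epsilon> > 0" using mpos by (simp add: \<epsilon>_def)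
    define z1 where "z1 = Complex (Re z0) (sqrt ((Im z0)^2 + \<epsilon>))"
    have cz1: "(cmod z1)^2 = (cmod z0)^2 + \<epsilon>"
    proof -
      have "(cmod z1)^2 = (Re z1)^2 + (Im z1)^2" by (rule cmod_power2)
      also have "(Im z1)^2 = (Im z0)^2 + \<epsilon>" using \<epsilon>pos by (simp add: z1_def)
      also have "Re z1 = Re z0" by (simp add: z1_def)
      finally show ?thesis using cmod_power2[of z0] by simp
    qed
    have rz1: "Re z1 = Re z0" by (simp add: z1_def)
    have qz1: "qq z1 = qq z0 + [:\<epsilon>:]"
      by (simp add: qq_def cz1 rz1)
    have fz1: "f z1 > m"
    proof -
      have "f z1 \<noteq> m"
      proof
        assume "f z1 = m"
        then have "cmod z1 \<le> cmod z0" using z0 by (simp add: S_def)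
        then have "(cmod z1)^2 \<le> (cmod z0)^2" by (simp add: power_mono)
        then show False using cz1 \<epsilon>pos by simp
      qed
      then show ?thesis using low[of z1] by simp
    qed
    have bound: "f z1 \<le> m * (1 + (1/2)^n)^2" if n1: "n \<ge> 1" for n
    proof -
      define G where "G = qq z0 ^ n + [:-((-\<epsilon>)^n):]"
      have dq: "degree (qq z0) = 2" "lead_coeff (qq z0) = 1" "qq z0 \<noteq> 0"
        by (simp_all add: qq_def)
      have dqn: "degree (qq z0 ^ n) = 2 * n" "lead_coeff (qq z0 ^ n) = 1"
        using dq by (simp add: degree_power_eq) (simp only: lead_coeff_power dq(2) power_one)
      have dG: "degree G = 2 * n"
        unfolding G_def using n1 dqn by (subst degree_add_eq_left) auto
      have lG: "lead_coeff G = 1"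
        unfolding G_def using n1 dqn dG[unfolded G_def] by (simp add: coeff_pCons split: nat.split)
      have "evr (qq z0) z1 = (- of_real \<epsilon> :: complex)"
        using evr_qq_self[of z1] by (simp add: qz1 evr_add evr_const eq_neg_iff_add_eq_0)
      then have rootG: "evr G z1 = (0::complex)"
        by (simp add: G_def evr_add evr_power evr_const)
      have kb: "f z1 * m ^ (2 * n - 1) \<le> norm (evr G \<xi>) ^ 2"
        unfolding f_def by (rule key_b[OF dG lG rootG]) (use low mpos in \<open>auto simp: f_def\<close>)
      have "norm (evr G \<xi>) \<le> m ^ n + \<epsilon> ^ n"
      proof -
        have "evr G \<xi> = evr (qq z0) \<xi> ^ n + of_real (-((-\<epsilon>)^n))"
          by (simp add: G_def evr_add evr_power evr_const)
        also have "norm \<dots> \<le> norm (evr (qq z0) \<xi> ^ n) + norm (of_real (-((-\<epsilon>)^n)) :: 'a)"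
          by (rule norm_triangle_ineq)
        also have "\<dots> = m ^ n + \<epsilon> ^ n"
          using fz0 \<epsilon>pos by (simp add: f_def norm_power power_abs)
        finally show ?thesis .
      qed
      then have "norm (evr G \<xi>) ^ 2 \<le> (m ^ n + \<epsilon> ^ n) ^ 2"
        by (simp add: power_mono)
      also have "(m ^ n + \<epsilon> ^ n) ^ 2 = m ^ (2 * n) * (1 + (1/2)^n)^2"
        by (simp add: \<epsilon>_def power_divide power_mult_distrib power_mult algebra_simps power2_eq_square)
      also have "m ^ (2 * n) = m * m ^ (2 * n - 1)"
        using n1 by (metis Suc_diff_1 mult_pos_pos pos2 power_Suc zero_less_one less_le_trans)
      finally have "f z1 * m ^ (2 * n - 1) \<le> (m * (1 + (1/2)^n)^2) * m ^ (2 * n - 1)"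
        using kb by (simp add: algebra_simps)
      then show ?thesis using mpos by simp
    qed
    have "(\<lambda>n. m * (1 + (1/2::real)^n)^2) \<longlonglongrightarrow> m * (1 + 0)^2"
      by (intro tendsto_intros LIMSEQ_power_zero) simp
    then have "eventually (\<lambda>n. m * (1 + (1/2::real)^n)^2 < f z1) sequentially"
      using fz1 by (intro order_tendstoD(2)) simp_all
    moreover have "eventually (\<lambda>n. n \<ge> (1::nat)) sequentially" by (rule eventually_ge_at_top)
    ultimately obtain n where "m * (1 + (1/2::real)^n)^2 < f z1" "n \<ge> 1"
      by (metis (mono_tags, lifting) eventually_at_top_linorder order.refl max.cobounded1 max.cobounded2)
    then show False using bound by fastforce
  qed
  then show ?thesis using m_def f_def by auto
qed

lemma quad_form:
  fixes y :: "'a::real_normed_field"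
  shows "\<exists>a b. (y - of_real a) * (y - of_real a) = - of_real (b * b)"
proof -
  obtain z where z: "evr (qq z) y = 0" using quad_root by blast
  have c: "(cmod z)^2 = (Re z)^2 + (Im z)^2" by (rule cmod_power2)
  have "(y - of_real (Re z)) * (y - of_real (Re z)) + of_real (Im z * Im z) = evr (qq z) y"
    unfolding evr_qq c by (simp add: algebra_simps power2_eq_square)
  then have "(y - of_real (Re z)) * (y - of_real (Re z)) = - of_real (Im z * Im z)"
    using z by (simp add: eq_neg_iff_add_eq_0)
  then show ?thesis by blast
qed

lemma field_span:
  "\<exists>j::'a::real_normed_field. \<forall>y. \<exists>r s. y = of_real r + of_real s * j"
proof (cases "\<forall>y::'a. \<exists>a. y = of_real a")
  case True
  then show ?thesis by (metis add.right_neutral mult_zero_right)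
next
  case False
  then obtain y0 :: 'a where y0: "\<forall>a. y0 \<noteq> of_real a" by blast
  obtain a0 b0 where ab0: "(y0 - of_real a0) * (y0 - of_real a0) = - of_real (b0 * b0)"
    using quad_form by blast
  have b0: "b0 \<noteq> 0"
  proof
    assume "b0 = 0"
    then have "(y0 - of_real a0) * (y0 - of_real a0) = 0" using ab0 by simp
    then have "y0 = of_real a0" by simp
    with y0 show False by blast
  qed
  define j where "j = (y0 - of_real a0) / of_real b0"
  have "j * j = ((y0 - of_real a0) * (y0 - of_real a0)) / of_real (b0 * b0)"
    unfolding j_def by (simp only: times_divide_times_eq of_real_mult)
  then have jj: "j * j = -1" using ab0 b0 by simp
  have "\<exists>r s. y = of_real r + of_real s * j" for y
  proof -
    obtain a b where ab: "(y - of_real a) * (y - of_real a) = - of_real (b * b)"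
      using quad_form by blast
    show ?thesis
    proof (cases "b = 0")
      case True
      then have "y = of_real a" using ab by simp
      then show ?thesis by (metis add.right_neutral mult_zero_left of_real_0)
    next
      case False
      define k where "k = (y - of_real a) / of_real b"
      have "k * k = ((y - of_real a) * (y - of_real a)) / of_real (b * b)"
        unfolding k_def by (simp only: times_divide_times_eq of_real_mult)
      then have kk: "k * k = -1" using ab False by simp
      have "(k - j) * (k + j) = 0" using kk jj by (simp add: algebra_simps)
      then have kj: "k = j \<or> k = - j" by (auto simp: eq_neg_iff_add_eq_0)
      have yk: "y = of_real a + of_real b * k" using False k_def
        by (metis add.commute diff_add_cancel nonzero_mult_div_cancel_left of_real_eq_0_iff times_divide_eq_right)
      from kj show ?thesis
      proof
        assume "k = j" then show ?thesis using yk by blast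
      next
        assume "k = - j" then have "y = of_real a + of_real (- b) * j" using yk by simp
        then show ?thesis by blast
      qed
    qed
  qed
  then show ?thesis by blast
qed

lemma field_separable:
  "\<exists>Q::'a::real_normed_field set. countable Q \<and> (\<forall>y. \<forall>e>0. \<exists>q\<in>Q. norm (y - q) < e)"
proof -
  obtain j :: 'a where j: "\<forall>y. \<exists>r s. y = of_real r + of_real s * j" using field_span by blast
  define Q where "Q = (\<lambda>(r,s). of_real r + of_real s * j) ` (\<rat> \<times> \<rat>)"
  have "countable Q" unfolding Q_def by (intro countable_image countable_SIGMA countable_rat)
  moreover have "\<exists>q\<in>Q. norm (y - q) < e" if e: "e > 0" for y e
  proof -
    obtain r s where y: "y = of_real r + of_real s * j" using j by blast
    obtain r' where r': "r' \<in> \<rat>" "r - e/2 < r'" "r' < r" using Rats_dense_in_real[of "r - e/2" r] e by auto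
    define d where "d = e / (2 * (norm j + 1))"
    have "norm j + 1 > 0" by (smt (verit) norm_ge_zero)
    then have d: "d > 0" using e by (simp add: d_def)
    obtain s' where s': "s' \<in> \<rat>" "s - d < s'" "s' < s" using Rats_dense_in_real[of "s - d" s] d by auto
    have "norm (y - (of_real r' + of_real s' * j)) = norm (of_real (r - r') + of_real (s - s') * j)"
      by (simp add: y algebra_simps)
    also have "\<dots> \<le> \<bar>r - r'\<bar> + \<bar>s - s'\<bar> * norm j"
      by (metis norm_mult norm_of_real norm_triangle_ineq)
    also have "\<bar>s - s'\<bar> * norm j \<le> d * (norm j + 1)"
      using s' by (intro mult_mono) auto
    also have "d * (norm j + 1) = e / 2" unfolding d_def using \<open>norm j + 1 > 0\<close> by (simp add: field_simps)
    finally have "norm (y - (of_real r' + of_real s' * j)) < e" using r' by simp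
    moreover have "of_real r' + of_real s' * j \<in> Q" using r' s' unfolding Q_def by auto
    ultimately show ?thesis by blast
  qed
  ultimately show ?thesis by blast
qed


lemma K_istop: "istopology (\<lambda>U. U \<subseteq> K_carrier \<A> \<and>
      (\<forall>A\<in>\<A>. Inr A \<in> U \<longrightarrow> (\<exists>G. finite G \<and> Inl ` (A - G) \<subseteq> U)))"
  unfolding istopology_def
proof (rule conjI; intro allI impI)
  fix S T :: "(nat + nat set) set"
  assume S: "S \<subseteq> K_carrier \<A> \<and> (\<forall>A\<in>\<A>. Inr A \<in> S \<longrightarrow> (\<exists>G. finite G \<and> Inl ` (A - G) \<subseteq> S))"
    and T: "T \<subseteq> K_carrier \<A> \<and> (\<forall>A\<in>\<A>. Inr A \<in> T \<longrightarrow> (\<exists>G. finite G \<and> Inl ` (A - G) \<subseteq> T))"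
  show "S \<inter> T \<subseteq> K_carrier \<A> \<and> (\<forall>A\<in>\<A>. Inr A \<in> S \<inter> T \<longrightarrow> (\<exists>G. finite G \<and> Inl ` (A - G) \<subseteq> S \<inter> T))"
  proof (intro conjI ballI impI)
    show "S \<inter> T \<subseteq> K_carrier \<A>" using S by blast
    fix A assume A: "A \<in> \<A>" "Inr A \<in> S \<inter> T"
    obtain G1 where "finite G1" "Inl ` (A - G1) \<subseteq> S" using S A by blast
    moreover obtain G2 where "finite G2" "Inl ` (A - G2) \<subseteq> T" using T A by blast
    ultimately show "\<exists>G. finite G \<and> Inl ` (A - G) \<subseteq> S \<inter> T"
      by (intro exI[of _ "G1 \<union> G2"]) auto
  qed
next
  fix K :: "(nat + nat set) set set"
  assume K: "\<forall>S\<in>K. S \<subseteq> K_carrier \<A> \<and> (\<forall>A\<in>\<A>. Inr A \<in> S \<longrightarrow> (\<exists>G. finite G \<and> Inl ` (A - G) \<subseteq> S))"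
  show "\<Union> K \<subseteq> K_carrier \<A> \<and> (\<forall>A\<in>\<A>. Inr A \<in> \<Union> K \<longrightarrow> (\<exists>G. finite G \<and> Inl ` (A - G) \<subseteq> \<Union> K))"
  proof (intro conjI ballI impI)
    show "\<Union> K \<subseteq> K_carrier \<A>" using K by blast
    fix A assume A: "A \<in> \<A>" "Inr A \<in> \<Union> K"
    then obtain S where "S \<in> K" "Inr A \<in> S" by blast
    have hS: "\<forall>A\<in>\<A>. Inr A \<in> S \<longrightarrow> (\<exists>G. finite G \<and> Inl ` (A - G) \<subseteq> S)"
      using K \<open>S \<in> K\<close> by blast
    obtain G where "finite G" "Inl ` (A - G) \<subseteq> S" using hS A(1) \<open>Inr A \<in> S\<close> by blast
    then show "\<exists>G. finite G \<and> Inl ` (A - G) \<subseteq> \<Union> K" using \<open>S \<in> K\<close> by blast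
  qed
qed

lemma K_open: "openin (K_top \<A>) U \<longleftrightarrow> U \<subseteq> K_carrier \<A> \<and>
      (\<forall>A\<in>\<A>. Inr A \<in> U \<longrightarrow> (\<exists>G. finite G \<and> Inl ` (A - G) \<subseteq> U))"
  unfolding K_top_def using K_istop[of \<A>] by (simp add: topology_inverse')

lemma K_topspace: "topspace (K_top \<A>) = K_carrier \<A>"
proof -
  have "openin (K_top \<A>) (K_carrier \<A>)"
    unfolding K_open K_carrier_def by (auto intro!: exI[of _ "{}"])
  then have "K_carrier \<A> \<subseteq> topspace (K_top \<A>)" by (rule openin_subset)
  moreover have "topspace (K_top \<A>) \<subseteq> K_carrier \<A>"
    using K_open[of \<A> "topspace (K_top \<A>)"] by simp
  ultimately show ?thesis by blast
qed

lemma K_open_col: "A \<in> \<A> \<Longrightarrow> finite G \<Longrightarrow> openin (K_top \<A>) (insert (Inr A) (Inl ` (A - G)))"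
  unfolding K_open K_carrier_def by auto

lemma K_open_sing: "openin (K_top \<A>) {Inl n}"
  unfolding K_open K_carrier_def by auto

lemma K_compact_finite:
  assumes "compactin (K_top \<A>) C"
  shows "finite {A\<in>\<A>. Inr A \<in> C}"
proof -
  define col where "col A = insert (Inr A) (Inl ` A)" for A :: "nat set"
  define \<U> where "\<U> = col ` \<A> \<union> range (\<lambda>n. {Inl n :: nat + nat set})"
  have "\<forall>U\<in>\<U>. openin (K_top \<A>) U"
    unfolding \<U>_def col_def using K_open_col[of _ \<A> "{}"] K_open_sing by auto
  moreover have "C \<subseteq> \<Union>\<U>"
  proof
    fix x assume "x \<in> C"
    then have "x \<in> K_carrier \<A>" using assms compactin_subset_topspace K_topspace by blast
    then show "x \<in> \<Union>\<U>" unfolding K_carrier_def \<U>_def col_def by auto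
  qed
  ultimately obtain F where F: "finite F" "F \<subseteq> \<U>" "C \<subseteq> \<Union>F"
    using assms unfolding compactin_def by meson
  have inj: "inj col" unfolding inj_def col_def by auto
  have "{A\<in>\<A>. Inr A \<in> C} \<subseteq> col -` F"
  proof
    fix A assume A: "A \<in> {A\<in>\<A>. Inr A \<in> C}"
    then obtain W where W: "W \<in> F" "Inr A \<in> W" using F by blast
    then have "W \<in> \<U>" using F by blast
    then obtain B where "W = col B" using W(2) unfolding \<U>_def by auto
    then have "B = A" using W(2) unfolding col_def by auto
    then show "A \<in> col -` F" using W \<open>W = col B\<close> by simp
  qed
  moreover have "finite (col -` F)" using F(1) inj by (rule finite_vimageI)
  ultimately show ?thesis by (rule finite_subset)
qed

lemma C0_bounded:
  assumes "f \<in> C0 X"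
  shows "\<exists>B. \<forall>p. norm (f p) \<le> B"
proof -
  have cont: "continuous_map X euclidean f" and comp: "compactin X {p \<in> topspace X. 1 \<le> norm (f p)}"
    and out: "\<forall>p. p \<notin> topspace X \<longrightarrow> f p = 0"
    using assms unfolding C0_def by auto
  have "compactin euclidean (f ` {p \<in> topspace X. 1 \<le> norm (f p)})"
    by (rule image_compactin[OF comp cont])
  then have "bounded (f ` {p \<in> topspace X. 1 \<le> norm (f p)})"
    by (simp add: compact_imp_bounded)
  then obtain B where B: "\<forall>y\<in>f ` {p \<in> topspace X. 1 \<le> norm (f p)}. norm y \<le> B"
    by (auto simp: bounded_iff)
  have "norm (f p) \<le> max 1 B" for p
  proof (cases "p \<in> topspace X \<and> 1 \<le> norm (f p)")
    case True then show ?thesis using B by fastforce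
  next
    case False
    then show ?thesis using out by (cases "p \<in> topspace X") auto
  qed
  then show ?thesis by blast
qed

lemma sup_dist_ge:
  assumes "f \<in> C0 X" "g \<in> C0 X" "p \<in> topspace X"
  shows "norm (f p - g p) \<le> sup_dist X f g"
proof -
  obtain B1 where B1: "\<forall>p. norm (f p) \<le> B1" using C0_bounded[OF assms(1)] by blast
  obtain B2 where B2: "\<forall>p. norm (g p) \<le> B2" using C0_bounded[OF assms(2)] by blast
  have "bdd_above (insert 0 ((\<lambda>p. norm (f p - g p)) ` topspace X))"
  proof (rule bdd_aboveI)
    fix x assume "x \<in> insert 0 ((\<lambda>p. norm (f p - g p)) ` topspace X)"
    then show "x \<le> B1 + B2"
    proof
      assume "x = 0" then show ?thesis using spec[OF B1, of undefined] spec[OF B2, of undefined] norm_ge_zero[of "f undefined"] norm_ge_zero[of "g undefined"] by linarith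
    next
      assume "x \<in> (\<lambda>p. norm (f p - g p)) ` topspace X"
      then obtain q where "x = norm (f q - g q)" by blast
      then show ?thesis using B1 B2 norm_triangle_ineq4[of "f q" "g q"] by (smt (verit))
    qed
  qed
  then show ?thesis unfolding sup_dist_def by (rule cSup_upper[rotated]) (use assms(3) in blast)
qed

lemma sup_dist_le:
  assumes "\<forall>p\<in>topspace X. norm (f p - g p) \<le> c" "0 \<le> c"
  shows "sup_dist X f g \<le> c"
  unfolding sup_dist_def by (rule cSup_least) (use assms in auto)

lemma s_countable:
  assumes "d \<in> C0 (prod_topology (top_of_set M) (K_top \<A>))"
  shows "countable {A\<in>\<A>. \<exists>k\<in>M. d (k, Inr A) \<noteq> 0}"
proof -
  let ?T = "prod_topology (top_of_set M) (K_top \<A>)"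
  define C where "C n = {p \<in> topspace ?T. 1 / real (Suc n) \<le> norm (d p)}" for n
  have "compactin ?T (C n)" for n
    using assms unfolding C_def C0_def by auto
  then have "compactin (K_top \<A>) (snd ` C n)" for n
    by (rule image_compactin) (rule continuous_map_snd)
  then have fin: "finite {A\<in>\<A>. Inr A \<in> snd ` C n}" for n
    by (rule K_compact_finite)
  have "{A\<in>\<A>. \<exists>k\<in>M. d (k, Inr A) \<noteq> 0} \<subseteq> (\<Union>n. {A\<in>\<A>. Inr A \<in> snd ` C n})"
  proof
    fix A assume "A \<in> {A\<in>\<A>. \<exists>k\<in>M. d (k, Inr A) \<noteq> 0}"
    then obtain k where A: "A \<in> \<A>" "k \<in> M" "d (k, Inr A) \<noteq> 0" by blast
    then have "norm (d (k, Inr A)) > 0" by simp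
    then obtain n where n: "1 / real (Suc n) < norm (d (k, Inr A))"
      using reals_Archimedean by (metis inverse_eq_divide)
    have "(k, Inr A) \<in> topspace ?T" using A by (simp add: K_topspace K_carrier_def)
    then have "(k, Inr A) \<in> C n" using n unfolding C_def by simp
    then have "Inr A \<in> snd ` C n" by force
    then show "A \<in> (\<Union>n. {A\<in>\<A>. Inr A \<in> snd ` C n})" using A by blast
  qed
  moreover have "countable (\<Union>n. {A\<in>\<A>. Inr A \<in> snd ` C n})"
    using fin by (intro countable_UN) (auto intro: countable_finite)
  ultimately show ?thesis by (rule countable_subset)
qed

fun stepf :: "('x set \<times> 'a::zero) list \<Rightarrow> 'x \<Rightarrow> 'a" where
  "stepf [] p = 0"
| "stepf ((B, c) # L) p = (if p \<in> B then c else stepf L p)"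

lemma stepf_cases:
  "(\<exists>B c. (B, c) \<in> set L \<and> p \<in> B \<and> stepf L p = c) \<or> ((\<forall>(B, c)\<in>set L. p \<notin> B) \<and> stepf L p = 0)"
proof (induction L)
  case Nil
  then show ?case by simp
next
  case (Cons a L)
  obtain B c where a: "a = (B, c)" by (cases a)
  show ?case
  proof (cases "p \<in> B")
    case True
    then have "(B, c) \<in> set (a # L) \<and> p \<in> B \<and> stepf (a # L) p = c" using a by simp
    then show ?thesis by blast
  next
    case False
    then have st: "stepf (a # L) p = stepf L p" using a by simp
    from Cons.IH show ?thesis
    proof
      assume "\<exists>B c. (B, c) \<in> set L \<and> p \<in> B \<and> stepf L p = c"
      then show ?thesis using st by fastforce
    next
      assume h: "(\<forall>(B, c)\<in>set L. p \<notin> B) \<and> stepf L p = 0"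
      have "\<forall>(B', c')\<in>set (a # L). p \<notin> B'" using h False a by auto
      then show ?thesis using h st by simp
    qed
  qed
qed

lemma approx:
  fixes f :: "'x \<Rightarrow> 'a::real_normed_vector"
  assumes cont: "continuous_map X euclidean f"
    and comp: "compactin X {p \<in> topspace X. e \<le> norm (f p)}"
    and e: "e > 0"
    and Bopen: "\<forall>B\<in>\<B>. openin X B"
    and base: "\<forall>p\<in>topspace X. f p \<noteq> 0 \<longrightarrow> (\<forall>W. openin X W \<and> p \<in> W \<longrightarrow> (\<exists>B\<in>\<B>. p \<in> B \<and> B \<subseteq> W))"
    and Qd: "\<forall>y. \<forall>e>0. \<exists>q\<in>Q. norm (y - q) < e"
  shows "\<exists>L \<in> lists (\<B> \<times> Q). \<forall>p\<in>topspace X. norm (f p - stepf L p) < e"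
proof -
  define C where "C = {p \<in> topspace X. e \<le> norm (f p)}"
  define \<U> where "\<U> = {B\<in>\<B>. \<exists>p\<in>B. \<forall>q\<in>B. norm (f q - f p) < e/3}"
  have "\<forall>U\<in>\<U>. openin X U" using Bopen unfolding \<U>_def by auto
  moreover have "C \<subseteq> \<Union>\<U>"
  proof
    fix p assume p: "p \<in> C"
    define W where "W = {q \<in> topspace X. f q \<in> ball (f p) (e/3)}"
    have "openin X W" unfolding W_def
      by (rule openin_continuous_map_preimage[OF cont]) simp
    moreover have "p \<in> W" using p e unfolding W_def C_def by simp
    moreover have "f p \<noteq> 0" using p e unfolding C_def by auto
    ultimately obtain B where B: "B \<in> \<B>" "p \<in> B" "B \<subseteq> W"
      using base p unfolding C_def by blast
    have "\<forall>q\<in>B. norm (f q - f p) < e/3"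
      using B(3) unfolding W_def by (auto simp: dist_norm norm_minus_commute)
    then have "B \<in> \<U>" using B unfolding \<U>_def by blast
    then show "p \<in> \<Union>\<U>" using B by blast
  qed
  ultimately obtain F where F: "finite F" "F \<subseteq> \<U>" "C \<subseteq> \<Union>F"
    using comp unfolding compactin_def C_def by meson
  define pt where "pt B = (SOME p. p \<in> B \<and> (\<forall>q\<in>B. norm (f q - f p) < e/3))" for B
  have pt: "pt B \<in> B \<and> (\<forall>q\<in>B. norm (f q - f (pt B)) < e/3)" if "B \<in> F" for B
  proof -
    have "\<exists>p. p \<in> B \<and> (\<forall>q\<in>B. norm (f q - f p) < e/3)" using that F(2) unfolding \<U>_def by blast
    then show ?thesis unfolding pt_def by (rule someI_ex)
  qed
  define cv where "cv B = (SOME c. c \<in> Q \<and> norm (f (pt B) - c) < e/3)" for B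
  have cv: "cv B \<in> Q \<and> norm (f (pt B) - cv B) < e/3" for B
  proof -
    have "\<exists>c. c \<in> Q \<and> norm (f (pt B) - c) < e/3" using Qd e by (meson divide_pos_pos zero_less_numeral)
    then show ?thesis unfolding cv_def by (rule someI_ex)
  qed
  obtain xs where xs: "set xs = F" using finite_list[OF F(1)] by blast
  define L where "L = map (\<lambda>B. (B, cv B)) xs"
  have "L \<in> lists (\<B> \<times> Q)" using xs F(2) cv unfolding L_def \<U>_def by auto
  moreover have "norm (f p - stepf L p) < e" if p: "p \<in> topspace X" for p
  proof -
    from stepf_cases[of L p] show ?thesis
    proof
      assume "\<exists>B c. (B, c) \<in> set L \<and> p \<in> B \<and> stepf L p = c"
      then obtain B c where Bc: "(B, c) \<in> set L" "p \<in> B" "stepf L p = c" by blast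
      then have BF: "B \<in> F" and c: "c = cv B" using xs unfolding L_def by auto
      have "norm (f p - c) \<le> norm (f p - f (pt B)) + norm (f (pt B) - cv B)"
        using c norm_triangle_ineq[of "f p - f (pt B)" "f (pt B) - cv B"] by simp
      also have "\<dots> < e/3 + e/3" using pt[OF BF] cv[of B] Bc(2) by (intro add_strict_mono) auto
      finally show ?thesis using Bc(3) e by simp
    next
      assume "(\<forall>(B, c)\<in>set L. p \<notin> B) \<and> stepf L p = 0"
      then have "p \<notin> \<Union>F" "stepf L p = 0" using xs unfolding L_def by auto
      then have "p \<notin> C" using F(3) by blast
      then show ?thesis using p \<open>stepf L p = 0\<close> unfolding C_def by simp
    qed
  qed
  ultimately show ?thesis by blast
qed

lemma sep_from_approx:
  assumes cF: "countable Fam"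
    and ap: "\<forall>f\<in>\<X>. \<forall>e>0. \<exists>d\<in>Fam. \<forall>p\<in>topspace X. norm (f p - d p) < e"
  shows "separable_sup X (\<X> :: ('x \<Rightarrow> 'a::real_normed_field) set)"
proof -
  define P where "P d n h \<longleftrightarrow> h \<in> \<X> \<and> (\<forall>p\<in>topspace X. norm (h p - d p) < 1 / real (Suc n))" for d n h
  define g where "g d n = (SOME h. P d n h)" for d n
  define D where "D = (\<lambda>(d, n). g d n) ` {(d, n). d \<in> Fam \<and> (\<exists>h. P d n h)}"
  have "countable D" unfolding D_def
    by (rule countable_image, rule countable_subset[of _ "Fam \<times> UNIV"]) (use cF in auto)
  moreover have "D \<subseteq> \<X>"
  proof
    fix h assume "h \<in> D"
    then obtain d n where "h = g d n" "\<exists>h. P d n h" unfolding D_def by auto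
    moreover have "P d n (g d n)" unfolding g_def by (rule someI_ex[OF \<open>\<exists>h. P d n h\<close>])
    ultimately show "h \<in> \<X>" unfolding P_def by blast
  qed
  moreover have "\<exists>h\<in>D. sup_dist X f h < e" if f: "f \<in> \<X>" and e: "e > 0" for f e
  proof -
    obtain n where n: "1 / real (Suc n) < e / 2"
      using reals_Archimedean[of "e/2"] e by (metis half_gt_zero inverse_eq_divide)
    obtain d where d: "d \<in> Fam" "\<forall>p\<in>topspace X. norm (f p - d p) < 1 / real (Suc n)"
    proof -
      have "1 / real (Suc n) > 0" by simp
      then show ?thesis using ap f that by blast
    qed
    have ex: "\<exists>h. P d n h" using f d unfolding P_def by blast
    have Pg: "P d n (g d n)" unfolding g_def by (rule someI_ex[OF ex])
    have "g d n \<in> D" using d(1) ex unfolding D_def by force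
    moreover have "sup_dist X f (g d n) \<le> 2 / real (Suc n)"
    proof (rule sup_dist_le)
      show "\<forall>p\<in>topspace X. norm (f p - g d n p) \<le> 2 / real (Suc n)"
      proof
        fix p assume p: "p \<in> topspace X"
        have "norm (f p - g d n p) \<le> norm (f p - d p) + norm (g d n p - d p)"
          using norm_triangle_ineq4[of "f p - d p" "g d n p - d p"] by simp
        also have "\<dots> \<le> 1 / real (Suc n) + 1 / real (Suc n)"
          using d(2) Pg p unfolding P_def by (intro add_mono less_imp_le) auto
        finally show "norm (f p - g d n p) \<le> 2 / real (Suc n)" by simp
      qed
    qed simp
    ultimately show ?thesis using n by force
  qed
  ultimately show ?thesis unfolding separable_sup_def by blast
qed


lemma local_base:
  fixes M :: "'m::metric_space set"
  assumes cM: "compact M" and S: "S \<subseteq> \<A>" "countable S"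
  shows "\<exists>\<B>. countable \<B> \<and> (\<forall>B\<in>\<B>. openin (prod_topology (top_of_set M) (K_top \<A>)) B) \<and>
     (\<forall>k w W. k \<in> M \<longrightarrow> w \<in> range Inl \<union> Inr ` S \<longrightarrow> openin (prod_topology (top_of_set M) (K_top \<A>)) W
        \<longrightarrow> (k, w) \<in> W \<longrightarrow> (\<exists>B\<in>\<B>. (k, w) \<in> B \<and> B \<subseteq> W))"
proof -
  let ?T = "prod_topology (top_of_set M) (K_top \<A>)"
  have "\<exists>N. finite N \<and> M \<subseteq> (\<Union>x\<in>N. ball x (1 / real (Suc m)))" for m :: nat
  proof -
    have "(1 / real (Suc m)) > 0" by simp
    then show ?thesis using cM unfolding compact_eq_totally_bounded by blast
  qed
  then obtain N where N: "\<And>m. finite (N m)" "\<And>m. M \<subseteq> (\<Union>x\<in>N m. ball x (1 / real (Suc m)))"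
    by metis
  define BM where "BM = (\<Union>m. (\<lambda>x. M \<inter> ball x (1 / real (Suc m))) ` N m)"
  define BK where "BK = range (\<lambda>n. {Inl n :: nat + nat set}) \<union>
      (\<lambda>(A, G). insert (Inr A) (Inl ` (A - G))) ` (S \<times> Collect finite)"
  define \<B> where "\<B> = (\<lambda>(U, V). U \<times> V) ` (BM \<times> BK)"
  have cBM: "countable BM" unfolding BM_def
    using N(1) by (intro countable_UN) (auto intro: countable_finite)
  have c1: "countable (range (\<lambda>n. {Inl n :: nat + nat set}))" by simp
  have "countable (S \<times> Collect (finite :: nat set \<Rightarrow> bool))"
    using S(2) countable_Collect_finite by (rule countable_SIGMA)
  then have c2: "countable ((\<lambda>(A, G). insert (Inr A) (Inl ` (A - G))) ` (S \<times> Collect finite) :: (nat + nat set) set set)"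
    by (rule countable_image)
  have cBK: "countable BK" unfolding BK_def using c1 c2 by (rule countable_Un)
  have "countable (BM \<times> BK)" using cBM cBK by (rule countable_SIGMA)
  then have cB: "countable \<B>" unfolding \<B>_def by (rule countable_image)
  have oBM: "\<forall>U\<in>BM. openin (top_of_set M) U" unfolding BM_def by (auto intro: openin_open_Int)
  have oBK: "\<forall>V\<in>BK. openin (K_top \<A>) V" unfolding BK_def
    using S(1) by (auto intro: K_open_col K_open_sing)
  have oB: "\<forall>B\<in>\<B>. openin ?T B" unfolding \<B>_def using oBM oBK by (auto simp: openin_prod_Times_iff)
  have lb: "\<exists>B\<in>\<B>. (k, w) \<in> B \<and> B \<subseteq> W"
    if k: "k \<in> M" and w: "w \<in> range Inl \<union> Inr ` S" and W: "openin ?T W" "(k, w) \<in> W" for k w W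
  proof -
    obtain U V where UV: "openin (top_of_set M) U" "openin (K_top \<A>) V" "k \<in> U" "w \<in> V" "U \<times> V \<subseteq> W"
      using W(1)[unfolded openin_prod_topology_alt, rule_format, OF W(2)] by blast
    obtain Ob where O: "open Ob" "U = M \<inter> Ob" using UV(1) by (auto simp: openin_open)
    then obtain r where r: "r > 0" "ball k r \<subseteq> Ob" using UV(3) open_contains_ball by blast
    obtain m where m: "inverse (real (Suc m)) < r / 2" using reals_Archimedean[of "r/2"] r by auto
    define \<delta> where "\<delta> = 1 / real (Suc m)"
    have \<delta>: "\<delta> < r / 2" using m by (simp add: \<delta>_def inverse_eq_divide)
    obtain x where x: "x \<in> N m" "k \<in> ball x \<delta>" using N(2)[of m] k unfolding \<delta>_def by blast
    define B1 where "B1 = M \<inter> ball x \<delta>"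
    have B1: "B1 \<in> BM" "k \<in> B1" "B1 \<subseteq> U"
    proof -
      show "B1 \<in> BM" unfolding B1_def BM_def \<delta>_def using x(1) by blast
      show "k \<in> B1" unfolding B1_def using k x(2) by blast
      show "B1 \<subseteq> U"
      proof
        fix y assume y: "y \<in> B1"
        then have "dist k y < r" using x(2) \<delta> dist_triangle[of k y x] unfolding B1_def
          by (auto simp: dist_commute)
        then show "y \<in> U" using y r(2) O(2) unfolding B1_def by auto
      qed
    qed
    obtain B2 where B2: "B2 \<in> BK" "w \<in> B2" "B2 \<subseteq> V"
    proof (cases w)
      case (Inl n)
      show ?thesis using that[of "{Inl n}"] Inl UV(4) unfolding BK_def by blast
    next
      case (Inr A)
      then have A: "A \<in> S" using w by auto
      then obtain G where G: "finite G" "Inl ` (A - G) \<subseteq> V"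
        using UV(2,4) Inr S(1) unfolding K_open by blast
      have "insert (Inr A) (Inl ` (A - G)) \<in> BK" unfolding BK_def using A G(1) by blast
      then show ?thesis using that[of "insert (Inr A) (Inl ` (A - G))"] Inr UV(4) G(2) by blast
    qed
    have mem: "B1 \<times> B2 \<in> \<B>" unfolding \<B>_def using B1(1) B2(1) by blast
    have "(k, w) \<in> B1 \<times> B2" using B1(2) B2(2) by blast
    moreover have "B1 \<times> B2 \<subseteq> W" using B1(3) B2(3) UV(5) by blast
    ultimately have "(k, w) \<in> B1 \<times> B2 \<and> B1 \<times> B2 \<subseteq> W" by blast
    then show ?thesis using mem by (rule bexI)
  qed
  show ?thesis
    apply (rule exI[of _ \<B>])
    apply (intro conjI cB oB allI impI)
    apply (rule lb)
       apply assumption+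
    done
qed

theorem lemma4p5:
  fixes M :: "'m::metric_space set"
    and \<A> :: "nat set set"
    and \<X> :: "('m \<times> (nat + nat set) \<Rightarrow> 'a::real_normed_field) set"
  assumes "compact M"
    and "almost_disjoint \<A>"
    and "closed_subspace_C0 (prod_topology (top_of_set M) (K_top \<A>)) \<X>"
  shows "separable_sup (prod_topology (top_of_set M) (K_top \<A>)) \<X> \<longleftrightarrow>
         countable {A \<in> \<A>. \<exists>f\<in>\<X>. \<exists>k\<in>M. f (k, Inr A) \<noteq> 0}"
proof -
  let ?T = "prod_topology (top_of_set M) (K_top \<A>)"
  define S where "S = {A \<in> \<A>. \<exists>f\<in>\<X>. \<exists>k\<in>M. f (k, Inr A) \<noteq> 0}"
  have XC: "\<X> \<subseteq> C0 ?T" using assms(3) unfolding closed_subspace_C0_def by blast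
  have top: "topspace ?T = M \<times> K_carrier \<A>" by (simp add: K_topspace)
  have "countable S" if sep: "separable_sup ?T \<X>"
  proof -
    obtain D where D: "countable D" "D \<subseteq> \<X>" "\<forall>f\<in>\<X>. \<forall>e>0. \<exists>d\<in>D. sup_dist ?T f d < e"
      using sep unfolding separable_sup_def by blast
    have "S \<subseteq> (\<Union>d\<in>D. {A\<in>\<A>. \<exists>k\<in>M. d (k, Inr A) \<noteq> 0})"
    proof
      fix A assume "A \<in> S"
      then obtain f k where A: "A \<in> \<A>" "f \<in> \<X>" "k \<in> M" "f (k, Inr A) \<noteq> 0"
        unfolding S_def by blast
      define e where "e = norm (f (k, Inr A))"
      have e: "e > 0" using A(4) by (simp add: e_def)
      obtain d where d: "d \<in> D" "sup_dist ?T f d < e" using D(3) A(2) e by blast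
      have p: "(k, Inr A) \<in> topspace ?T" using A(1,3) by (simp add: K_topspace K_carrier_def)
      have "norm (f (k, Inr A) - d (k, Inr A)) \<le> sup_dist ?T f d"
        using sup_dist_ge[OF _ _ p, of f d] XC A(2) d(1) D(2) by blast
      then have "d (k, Inr A) \<noteq> 0" using d(2) by (auto simp: e_def)
      then show "A \<in> (\<Union>d\<in>D. {A\<in>\<A>. \<exists>k\<in>M. d (k, Inr A) \<noteq> 0})"
        using A d(1) by blast
    qed
    moreover have "countable (\<Union>d\<in>D. {A\<in>\<A>. \<exists>k\<in>M. d (k, Inr A) \<noteq> 0})"
    proof (rule countable_UN[OF D(1)])
      fix d assume "d \<in> D"
      then have "d \<in> C0 ?T" using D(2) XC by blast
      then show "countable {A\<in>\<A>. \<exists>k\<in>M. d (k, Inr A) \<noteq> 0}" by (rule s_countable)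
    qed
    ultimately show ?thesis by (rule countable_subset)
  qed
  moreover have "separable_sup ?T \<X>" if cS: "countable S"
  proof -
    obtain Q :: "'a set" where Q: "countable Q" "\<forall>y. \<forall>e>0. \<exists>q\<in>Q. norm (y - q) < e"
      using field_separable by blast
    have SA: "S \<subseteq> \<A>" unfolding S_def by blast
    obtain \<B> where B: "countable \<B>" "\<forall>B\<in>\<B>. openin ?T B"
      "\<forall>k w W. k \<in> M \<longrightarrow> w \<in> range Inl \<union> Inr ` S \<longrightarrow> openin ?T W
        \<longrightarrow> (k, w) \<in> W \<longrightarrow> (\<exists>B\<in>\<B>. (k, w) \<in> B \<and> B \<subseteq> W)"
      using local_base[OF assms(1) SA cS] by blast
    define Fam where "Fam = stepf ` lists (\<B> \<times> Q)"
    have "countable (\<B> \<times> Q)" using B(1) Q(1) by (rule countable_SIGMA)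
    then have cF: "countable Fam" unfolding Fam_def by (intro countable_image countable_lists)
    have "\<forall>f\<in>\<X>. \<forall>e>0. \<exists>d\<in>Fam. \<forall>p\<in>topspace ?T. norm (f p - d p) < e"
    proof (intro ballI allI impI)
      fix f e assume f: "f \<in> \<X>" and e: "(e::real) > 0"
      then have fC: "f \<in> C0 ?T" using XC by blast
      have cont: "continuous_map ?T euclidean f" using fC unfolding C0_def by blast
      have comp: "compactin ?T {p \<in> topspace ?T. e \<le> norm (f p)}" using fC e unfolding C0_def by blast
      have base: "\<forall>p\<in>topspace ?T. f p \<noteq> 0 \<longrightarrow> (\<forall>W. openin ?T W \<and> p \<in> W \<longrightarrow> (\<exists>B\<in>\<B>. p \<in> B \<and> B \<subseteq> W))"
      proof (intro ballI impI allI)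
        fix p W assume p: "p \<in> topspace ?T" and fp: "f p \<noteq> 0" and W: "openin ?T W \<and> p \<in> W"
        obtain k w where kw: "p = (k, w)" by (cases p)
        have k: "k \<in> M" and wK: "w \<in> K_carrier \<A>" using p kw top by auto
        have "w \<in> range Inl \<union> Inr ` S"
        proof (cases w)
          case (Inl n) then show ?thesis by simp
        next
          case (Inr A)
          then have "A \<in> \<A>" using wK by (auto simp: K_carrier_def)
          then have "A \<in> S" using f k fp kw Inr unfolding S_def by blast
          then show ?thesis using Inr by simp
        qed
        then show "\<exists>B\<in>\<B>. p \<in> B \<and> B \<subseteq> W" using B(3) k W kw by blast
      qed
      obtain L where L: "L \<in> lists (\<B> \<times> Q)" "\<forall>p\<in>topspace ?T. norm (f p - stepf L p) < e"
        using approx[OF cont comp e B(2) base Q(2)] by blast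
      then show "\<exists>d\<in>Fam. \<forall>p\<in>topspace ?T. norm (f p - d p) < e" unfolding Fam_def by blast
    qed
    then show ?thesis using cF by (intro sep_from_approx)
  qed
  ultimately show ?thesis unfolding S_def by blast
qed

end
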